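(* Consider a mean-variance team stochastic game as described in the context, and suppose the long-run average reward $\eta^{\boldsymbol{\mu}}$ takes the same value for all joint policies $\boldsymbol{\mu}\in\mathcal{U}$. Then Algorithm MV-MAPI (described in the context) converges to a Nash equilibrium $\tilde{\boldsymbol{\mu}}$, i.e. $J(\tilde{\boldsymbol{\mu}})\ge J(\mu_i,\tilde{\boldsymbol{\mu}}_{-i})$ for all $i\in\mathcal{N}$ and $\mu_i\in\mathcal{U}_i$.
   Context: Game: finite agents $\mathcal{N}=\{1,\dots,N\}$, finite state space $\mathcal{S}$, finite action sets $\mathcal{A}_i$, $\mathcal{A}=\prod_i\mathcal{A}_i$, transition kernel $P(s'|s,\boldsymbol{a})$, common reward $r:\mathcal{S}\times\mathcal{A}\to\mathbb{R}$. Policies $\mu_i:\mathcal{S}\to\Delta(\mathcal{A}_i)$ (set $\mathcal{U}_i$); joint policies $\boldsymbol{\mu}\in\mathcal{U}=\prod_i\mathcal{U}_i$ with $\boldsymbol{\mu}(\boldsymbol{a}|s)=\prod_i\mu_i(a_i|s)$; $(\mu_i,\boldsymbol{\mu}_{-i})$ means agent $i$ uses $\mu_i$, others use $\boldsymbol{\mu}_{-i}$. Standing assumption: the chain $P^{\boldsymbol{\mu}}(s'|s)=\sum_{\boldsymbol{a}}\boldsymbol{\mu}(\boldsymbol{a}|s)P(s'|s,\boldsymbol{a})$ is ergodic for every $\boldsymbol{\mu}\in\mathcal{U}$, stationary distribution $\pi^{\boldsymbol{\mu}}$. $\eta^{\boldsymbol{\mu}}=\sum_s\pi^{\boldsymbol{\mu}}(s)\sum_{\boldsymbol{a}}\boldsymbol{\mu}(\boldsymbol{a}|s)r(s,\boldsymbol{a})$;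 $\zeta^{\boldsymbol{\mu}}=\sum_s\pi^{\boldsymbol{\mu}}(s)\sum_{\boldsymbol{a}}\boldsymbol{\mu}(\boldsymbol{a}|s)(r(s,\boldsymbol{a})-\eta^{\boldsymbol{\mu}})^2$; for fixed $\beta\ge0$, $J(\boldsymbol{\mu})=\eta^{\boldsymbol{\mu}}-\beta\zeta^{\boldsymbol{\mu}}$. $f^{\boldsymbol{\mu}}(s,\boldsymbol{a})=r(s,\boldsymbol{a})-\beta(r(s,\boldsymbol{a})-\eta^{\boldsymbol{\mu}})^2$, $f^{\boldsymbol{\mu}}(s)=\sum_{\boldsymbol{a}}\boldsymbol{\mu}(\boldsymbol{a}|s)f^{\boldsymbol{\mu}}(s,\boldsymbol{a})$; $V_f^{\boldsymbol{\mu}}$ solves $V(s)=f^{\boldsymbol{\mu}}(s)-J(\boldsymbol{\mu})+\sum_{s'}P^{\boldsymbol{\mu}}(s'|s)V(s')$ (unique up to an additive constant); $Q_f^{\boldsymbol{\mu}}(s,\boldsymbol{a})=f^{\boldsymbol{\mu}}(s,\boldsymbol{a})-J(\boldsymbol{\mu})+\sum_{s'}P(s'|s,\boldsymbol{a})V_f^{\boldsymbol{\mu}}(s')$, $A_f^{\boldsymbol{\mu}}=Q_f^{\boldsymbol{\mu}}-V_f^{\boldsymbol{\mu}}$. Algorithm MV-MAPI: start with a deterministic joint policy $\boldsymbol{\mu}^{(0)}$. For $k=0,1,\dots$: set $\hat{\boldsymbol{\mu}}^{(k,0)}=\boldsymbol{\mu}^{(k)}$ and draw a random permutation $i_1,\dots,i_N$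 of the agents. For $h=1,\dots,N$: for every $s$, set $\mu^{(k+1)}_{i_h}(s)$ to be an action $a_{i_h}$ maximizing $\mathbb{E}_{\boldsymbol{a}_{-i_h}\sim\hat{\boldsymbol{\mu}}^{(k,h-1)}_{-i_h}(\cdot|s)}[A_f^{\hat{\boldsymbol{\mu}}^{(k,h-1)}}(s,a_{i_h},\boldsymbol{a}_{-i_h})]$, keeping $\mu^{(k+1)}_{i_h}(s)=\mu^{(k)}_{i_h}(s)$ whenever the latter attains the maximum; set $\hat{\boldsymbol{\mu}}^{(k,h)}=(\mu^{(k+1)}_{i_1},\dots,\mu^{(k+1)}_{i_h},\mu^{(k)}_{i_{h+1}},\dots,\mu^{(k)}_{i_N})$. If $\mu^{(k+1)}_i=\mu^{(k)}_i$ for all $i$, stop and return $\boldsymbol{\mu}^{(k)}$; otherwise set $\boldsymbol{\mu}^{(k+1)}=\hat{\boldsymbol{\mu}}^{(k,N)}$. *)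

theory Defs
  imports Complex_Main
begin

definition joint_actions :: "('i \<Rightarrow> 'a set) \<Rightarrow> ('i \<Rightarrow> 'a) set" where
  "joint_actions A = {a. \<forall>i. a i \<in> A i}"

definition policy_set :: "('i \<Rightarrow> 'a set) \<Rightarrow> 'i \<Rightarrow> ('s \<Rightarrow> 'a \<Rightarrow> real) set" where
  "policy_set A i = {p. \<forall>s. (\<forall>b. 0 \<le> p s b) \<and> (\<forall>b. b \<notin> A i \<longrightarrow> p s b = 0)
                              \<and> sum (p s) (A i) = 1}"

definition joint_policies :: "('i \<Rightarrow> 'a set) \<Rightarrow> ('i \<Rightarrow> 's \<Rightarrow> 'a \<Rightarrow> real) set" where
  "joint_policies A = {mu. \<forall>i. mu i \<in> policy_set A i}"

definition jprob :: "('i::finite \<Rightarrow> 's \<Rightarrow> 'a \<Rightarrow> real) \<Rightarrow> 's \<Rightarrow> ('i \<Rightarrow> 'a) \<Rightarrow> real" where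
  "jprob mu s a = (\<Prod>i\<in>UNIV. mu i s (a i))"

definition Pmu :: "('i::finite \<Rightarrow> 'a set) \<Rightarrow> ('s \<Rightarrow> ('i \<Rightarrow> 'a) \<Rightarrow> 's \<Rightarrow> real)
    \<Rightarrow> ('i \<Rightarrow> 's \<Rightarrow> 'a \<Rightarrow> real) \<Rightarrow> 's \<Rightarrow> 's \<Rightarrow> real" where
  "Pmu A P mu s s' = (\<Sum>a\<in>joint_actions A. jprob mu s a * P s a s')"

primrec mpow :: "('s::finite \<Rightarrow> 's \<Rightarrow> real) \<Rightarrow> nat \<Rightarrow> 's \<Rightarrow> 's \<Rightarrow> real" where
  "mpow M 0 s s' = (if s = s' then 1 else 0)"
| "mpow M (Suc n) s s' = (\<Sum>t\<in>UNIV. mpow M n s t * M t s')"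

text \<open>Ergodic finite Markov chain (irreducible and aperiodic), equivalently regular:
  some power of the transition matrix is entrywise positive.\<close>
definition ergodic :: "('s::finite \<Rightarrow> 's \<Rightarrow> real) \<Rightarrow> bool" where
  "ergodic M \<longleftrightarrow> (\<exists>n. \<forall>s s'. 0 < mpow M n s s')"

definition is_stationary :: "('s::finite \<Rightarrow> 's \<Rightarrow> real) \<Rightarrow> ('s \<Rightarrow> real) \<Rightarrow> bool" where
  "is_stationary M \<pi> \<longleftrightarrow> (\<forall>s. 0 \<le> \<pi> s) \<and> sum \<pi> UNIV = 1 \<and> (\<forall>s'. \<pi> s' = (\<Sum>s\<in>UNIV. \<pi> s * M s s'))"

definition stat_dist :: "('i::finite \<Rightarrow> 'a set) \<Rightarrow> ('s::finite \<Rightarrow> ('i \<Rightarrow> 'a) \<Rightarrow> 's \<Rightarrow> real)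
    \<Rightarrow> ('i \<Rightarrow> 's \<Rightarrow> 'a \<Rightarrow> real) \<Rightarrow> 's \<Rightarrow> real" where
  "stat_dist A P mu = (THE \<pi>. is_stationary (Pmu A P mu) \<pi>)"

definition eta :: "('i::finite \<Rightarrow> 'a set) \<Rightarrow> ('s::finite \<Rightarrow> ('i \<Rightarrow> 'a) \<Rightarrow> 's \<Rightarrow> real)
    \<Rightarrow> ('s \<Rightarrow> ('i \<Rightarrow> 'a) \<Rightarrow> real) \<Rightarrow> ('i \<Rightarrow> 's \<Rightarrow> 'a \<Rightarrow> real) \<Rightarrow> real" where
  "eta A P r mu = (\<Sum>s\<in>UNIV. stat_dist A P mu s * (\<Sum>a\<in>joint_actions A. jprob mu s a * r s a))"

definition zeta :: "('i::finite \<Rightarrow> 'a set) \<Rightarrow> ('s::finite \<Rightarrow> ('i \<Rightarrow> 'a) \<Rightarrow> 's \<Rightarrow> real)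
    \<Rightarrow> ('s \<Rightarrow> ('i \<Rightarrow> 'a) \<Rightarrow> real) \<Rightarrow> ('i \<Rightarrow> 's \<Rightarrow> 'a \<Rightarrow> real) \<Rightarrow> real" where
  "zeta A P r mu = (\<Sum>s\<in>UNIV. stat_dist A P mu s *
      (\<Sum>a\<in>joint_actions A. jprob mu s a * (r s a - eta A P r mu)\<^sup>2))"

definition Jmv :: "('i::finite \<Rightarrow> 'a set) \<Rightarrow> ('s::finite \<Rightarrow> ('i \<Rightarrow> 'a) \<Rightarrow> 's \<Rightarrow> real)
    \<Rightarrow> ('s \<Rightarrow> ('i \<Rightarrow> 'a) \<Rightarrow> real) \<Rightarrow> real \<Rightarrow> ('i \<Rightarrow> 's \<Rightarrow> 'a \<Rightarrow> real) \<Rightarrow> real" where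
  "Jmv A P r \<beta> mu = eta A P r mu - \<beta> * zeta A P r mu"

definition f_sa :: "('i::finite \<Rightarrow> 'a set) \<Rightarrow> ('s::finite \<Rightarrow> ('i \<Rightarrow> 'a) \<Rightarrow> 's \<Rightarrow> real)
    \<Rightarrow> ('s \<Rightarrow> ('i \<Rightarrow> 'a) \<Rightarrow> real) \<Rightarrow> real \<Rightarrow> ('i \<Rightarrow> 's \<Rightarrow> 'a \<Rightarrow> real) \<Rightarrow> 's \<Rightarrow> ('i \<Rightarrow> 'a) \<Rightarrow> real" where
  "f_sa A P r \<beta> mu s a = r s a - \<beta> * (r s a - eta A P r mu)\<^sup>2"

definition f_s :: "('i::finite \<Rightarrow> 'a set) \<Rightarrow> ('s::finite \<Rightarrow> ('i \<Rightarrow> 'a) \<Rightarrow> 's \<Rightarrow> real)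
    \<Rightarrow> ('s \<Rightarrow> ('i \<Rightarrow> 'a) \<Rightarrow> real) \<Rightarrow> real \<Rightarrow> ('i \<Rightarrow> 's \<Rightarrow> 'a \<Rightarrow> real) \<Rightarrow> 's \<Rightarrow> real" where
  "f_s A P r \<beta> mu s = (\<Sum>a\<in>joint_actions A. jprob mu s a * f_sa A P r \<beta> mu s a)"

text \<open>Poisson equation for V_f (solution unique up to an additive constant).\<close>
definition is_Vf :: "('i::finite \<Rightarrow> 'a set) \<Rightarrow> ('s::finite \<Rightarrow> ('i \<Rightarrow> 'a) \<Rightarrow> 's \<Rightarrow> real)
    \<Rightarrow> ('s \<Rightarrow> ('i \<Rightarrow> 'a) \<Rightarrow> real) \<Rightarrow> real \<Rightarrow> ('i \<Rightarrow> 's \<Rightarrow> 'a \<Rightarrow> real) \<Rightarrow> ('s \<Rightarrow> real) \<Rightarrow> bool" where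
  "is_Vf A P r \<beta> mu V \<longleftrightarrow>
     (\<forall>s. V s = f_s A P r \<beta> mu s - Jmv A P r \<beta> mu + (\<Sum>s'\<in>UNIV. Pmu A P mu s s' * V s'))"

definition Vf :: "('i::finite \<Rightarrow> 'a set) \<Rightarrow> ('s::finite \<Rightarrow> ('i \<Rightarrow> 'a) \<Rightarrow> 's \<Rightarrow> real)
    \<Rightarrow> ('s \<Rightarrow> ('i \<Rightarrow> 'a) \<Rightarrow> real) \<Rightarrow> real \<Rightarrow> ('i \<Rightarrow> 's \<Rightarrow> 'a \<Rightarrow> real) \<Rightarrow> 's \<Rightarrow> real" where
  "Vf A P r \<beta> mu = (SOME V. is_Vf A P r \<beta> mu V)"

definition Qf :: "('i::finite \<Rightarrow> 'a set) \<Rightarrow> ('s::finite \<Rightarrow> ('i \<Rightarrow> 'a) \<Rightarrow> 's \<Rightarrow> real)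
    \<Rightarrow> ('s \<Rightarrow> ('i \<Rightarrow> 'a) \<Rightarrow> real) \<Rightarrow> real \<Rightarrow> ('i \<Rightarrow> 's \<Rightarrow> 'a \<Rightarrow> real) \<Rightarrow> 's \<Rightarrow> ('i \<Rightarrow> 'a) \<Rightarrow> real" where
  "Qf A P r \<beta> mu s a = f_sa A P r \<beta> mu s a - Jmv A P r \<beta> mu + (\<Sum>s'\<in>UNIV. P s a s' * Vf A P r \<beta> mu s')"

definition Af :: "('i::finite \<Rightarrow> 'a set) \<Rightarrow> ('s::finite \<Rightarrow> ('i \<Rightarrow> 'a) \<Rightarrow> 's \<Rightarrow> real)
    \<Rightarrow> ('s \<Rightarrow> ('i \<Rightarrow> 'a) \<Rightarrow> real) \<Rightarrow> real \<Rightarrow> ('i \<Rightarrow> 's \<Rightarrow> 'a \<Rightarrow> real) \<Rightarrow> 's \<Rightarrow> ('i \<Rightarrow> 'a) \<Rightarrow> real" where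
  "Af A P r \<beta> mu s a = Qf A P r \<beta> mu s a - Vf A P r \<beta> mu s"

definition exp_adv :: "('i::finite \<Rightarrow> 'a set) \<Rightarrow> ('s::finite \<Rightarrow> ('i \<Rightarrow> 'a) \<Rightarrow> 's \<Rightarrow> real)
    \<Rightarrow> ('s \<Rightarrow> ('i \<Rightarrow> 'a) \<Rightarrow> real) \<Rightarrow> real \<Rightarrow> ('i \<Rightarrow> 's \<Rightarrow> 'a \<Rightarrow> real) \<Rightarrow> 'i \<Rightarrow> 's \<Rightarrow> 'a \<Rightarrow> real" where
  "exp_adv A P r \<beta> mu i s b =
     (\<Sum>a\<in>{a\<in>joint_actions A. a i = b}. (\<Prod>j\<in>UNIV - {i}. mu j s (a j)) * Af A P r \<beta> mu s a)"

definition det_pol :: "('i \<Rightarrow> 's \<Rightarrow> 'a) \<Rightarrow> 'i \<Rightarrow> 's \<Rightarrow> 'a \<Rightarrow> real" where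
  "det_pol d i s b = (if b = d i s then 1 else 0)"

definition is_perm :: "'i list \<Rightarrow> bool" where
  "is_perm ps \<longleftrightarrow> distinct ps \<and> set ps = UNIV"

text \<open>The h-th agent (0-indexed) is updated against the intermediate policy in
  which the first h agents of perm already use their new policies.\<close>
definition mapi_step :: "('i::finite \<Rightarrow> 'a set) \<Rightarrow> ('s::finite \<Rightarrow> ('i \<Rightarrow> 'a) \<Rightarrow> 's \<Rightarrow> real)
    \<Rightarrow> ('s \<Rightarrow> ('i \<Rightarrow> 'a) \<Rightarrow> real) \<Rightarrow> real \<Rightarrow> 'i list
    \<Rightarrow> ('i \<Rightarrow> 's \<Rightarrow> 'a) \<Rightarrow> ('i \<Rightarrow> 's \<Rightarrow> 'a) \<Rightarrow> bool" where
  "mapi_step A P r \<beta> perm d d' \<longleftrightarrow>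
     (\<forall>h<length perm. \<forall>s.
        let i = perm ! h;
            hat = det_pol (\<lambda>j. if j \<in> set (take h perm) then d' j else d j);
            g = exp_adv A P r \<beta> hat i s
        in d' i s \<in> A i
           \<and> (\<forall>b\<in>A i. g b \<le> g (d' i s))
           \<and> ((\<forall>b\<in>A i. g b \<le> g (d i s)) \<longrightarrow> d' i s = d i s))"

definition is_nash :: "('i::finite \<Rightarrow> 'a set) \<Rightarrow> ('s::finite \<Rightarrow> ('i \<Rightarrow> 'a) \<Rightarrow> 's \<Rightarrow> real)
    \<Rightarrow> ('s \<Rightarrow> ('i \<Rightarrow> 'a) \<Rightarrow> real) \<Rightarrow> real \<Rightarrow> ('i \<Rightarrow> 's \<Rightarrow> 'a \<Rightarrow> real) \<Rightarrow> bool" where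
  "is_nash A P r \<beta> mu \<longleftrightarrow>
     (\<forall>i. \<forall>p\<in>policy_set A i. Jmv A P r \<beta> (mu(i := p)) \<le> Jmv A P r \<beta> mu)"

end

theory Submission
  imports Defs "HOL-Analysis.Analysis"
begin

lemma lin_surj:
  fixes T :: "'s::finite \<Rightarrow> 's \<Rightarrow> real"
  assumes inj0: "\<And>x. (\<forall>s. (\<Sum>t\<in>UNIV. T s t * x t) = 0) \<Longrightarrow> (\<forall>s. x s = 0)"
  shows "\<exists>x. \<forall>s. (\<Sum>t\<in>UNIV. T s t * x t) = c s"
proof -
  define Tm where "Tm = ((\<chi> i j. T i j) :: real^'s^'s)"
  have lin: "linear ((*v) Tm)" by (rule matrix_vector_mul_linear)
  have "inj ((*v) Tm)"
  proof (rule injI)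
    fix x y assume "Tm *v x = Tm *v y"
    then have "Tm *v (x - y) = 0" by (simp add: matrix_vector_mult_diff_distrib)
    then have "\<forall>s. (\<Sum>t\<in>UNIV. T s t * (x - y)$t) = 0"
      by (auto simp: Tm_def matrix_vector_mult_def vec_eq_iff)
    from inj0[OF this] show "x = y" by (simp add: vec_eq_iff)
  qed
  with lin have "surj ((*v) Tm)" by (simp add: linear_injective_imp_surjective)
  then obtain v where "Tm *v v = (\<chi> s. c s)" by (metis surjD)
  then have "\<forall>s. (\<Sum>t\<in>UNIV. T s t * v$t) = c s"
    by (auto simp: Tm_def matrix_vector_mult_def vec_eq_iff)
  then show ?thesis by blast
qed

definition stoch :: "('s::finite \<Rightarrow> 's \<Rightarrow> real) \<Rightarrow> bool" where
  "stoch M \<longleftrightarrow> (\<forall>s t. 0 \<le> M s t) \<and> (\<forall>s. (\<Sum>t\<in>UNIV. M s t) = 1)"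

definition lfix :: "('s::finite \<Rightarrow> 's \<Rightarrow> real) \<Rightarrow> ('s \<Rightarrow> real) \<Rightarrow> bool" where
  "lfix M x \<longleftrightarrow> (\<forall>s'. x s' = (\<Sum>s\<in>UNIV. x s * M s s'))"

lemma swap_lr:
  fixes x :: "'s::finite \<Rightarrow> real" and y :: "'t::finite \<Rightarrow> real"
  shows "(\<Sum>s\<in>UNIV. x s * (\<Sum>t\<in>UNIV. A s t * y t)) = (\<Sum>t\<in>UNIV. (\<Sum>s\<in>UNIV. x s * A s t) * y t)"
proof -
  have "(\<Sum>s\<in>UNIV. x s * (\<Sum>t\<in>UNIV. A s t * y t)) = (\<Sum>s\<in>UNIV. \<Sum>t\<in>UNIV. x s * A s t * y t)"
    by (simp add: sum_distrib_left mult.assoc)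
  also have "\<dots> = (\<Sum>t\<in>UNIV. \<Sum>s\<in>UNIV. x s * A s t * y t)" by (rule sum.swap)
  also have "\<dots> = (\<Sum>t\<in>UNIV. (\<Sum>s\<in>UNIV. x s * A s t) * y t)" by (simp add: sum_distrib_right)
  finally show ?thesis .
qed

lemma sum_swap_col:
  fixes x :: "'s::finite \<Rightarrow> real"
  shows "(\<Sum>t\<in>UNIV. \<Sum>s\<in>UNIV. x s * A s t) = (\<Sum>s\<in>UNIV. x s * (\<Sum>t\<in>UNIV. A s t))"
  by (subst sum.swap) (simp add: sum_distrib_left)

lemma delta_l: "(\<Sum>t\<in>UNIV. (if s = t then 1 else 0) * (g t::real)) = g (s::'s::finite)"
proof -
  have "(\<Sum>t\<in>UNIV. (if s = t then 1 else 0) * g t) = (\<Sum>t\<in>UNIV. if s = t then g t else 0)"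
    by (rule sum.cong) auto
  then show ?thesis by simp
qed

lemma delta_r: "(\<Sum>t\<in>UNIV. (g t::real) * (if t = s then 1 else 0)) = g (s::'s::finite)"
proof -
  have "(\<Sum>t\<in>UNIV. g t * (if t = s then 1 else 0)) = (\<Sum>t\<in>UNIV. if t = s then g t else 0)"
    by (rule sum.cong) auto
  then show ?thesis by simp
qed

lemma mpow_nonneg: "stoch M \<Longrightarrow> 0 \<le> mpow M n s t"
  by (induction n arbitrary: t) (auto simp: stoch_def intro!: sum_nonneg)

lemma mpow_rowsum: "stoch M \<Longrightarrow> (\<Sum>t\<in>UNIV. mpow M n s t) = 1"
proof (induction n)
  case 0 then show ?case by simp
next
  case (Suc n)
  have "(\<Sum>t\<in>UNIV. mpow M (Suc n) s t) = (\<Sum>u\<in>UNIV. \<Sum>t\<in>UNIV. mpow M n s u * M u t)"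
    by (simp, rule sum.swap)
  also have "\<dots> = (\<Sum>u\<in>UNIV. mpow M n s u)"
    using Suc.prems by (simp add: sum_distrib_left[symmetric] stoch_def)
  finally show ?case using Suc by simp
qed

lemma lfix_pow: "lfix M x \<Longrightarrow> x s' = (\<Sum>s\<in>UNIV. x s * mpow M n s s')"
proof (induction n arbitrary: s')
  case 0 then show ?case by (simp add: delta_l delta_r)
next
  case (Suc n)
  have "(\<Sum>s\<in>UNIV. x s * mpow M (Suc n) s s') = (\<Sum>t\<in>UNIV. (\<Sum>s\<in>UNIV. x s * mpow M n s t) * M t s')"
    by (simp add: swap_lr)
  also have "\<dots> = (\<Sum>t\<in>UNIV. x t * M t s')" using Suc by (metis (no_types))
  finally show ?case using Suc.prems by (metis lfix_def)
qed

lemma harm_pow: "(\<And>s. V s = (\<Sum>t\<in>UNIV. M s t * V t)) \<Longrightarrow> V s = (\<Sum>t\<in>UNIV. mpow M n s t * V t)"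
proof (induction n arbitrary: s)
  case 0 show ?case by (simp add: delta_l delta_r)
next
  case (Suc n)
  have "(\<Sum>t\<in>UNIV. mpow M (Suc n) s t * V t) = (\<Sum>u\<in>UNIV. mpow M n s u * (\<Sum>t\<in>UNIV. M u t * V t))"
    by (simp add: swap_lr)
  also have "\<dots> = (\<Sum>u\<in>UNIV. mpow M n s u * V u)" by (simp add: Suc.prems[symmetric])
  finally show ?case using Suc.IH[OF Suc.prems, of s] by linarith
qed

lemma lfix_nonneg_pos:
  assumes st: "stoch M" and erg: "ergodic M" and lf: "lfix M y" and nn: "\<And>s. 0 \<le> y s"
    and ex: "y s0 \<noteq> 0"
  shows "0 < y s"
proof -
  obtain n where Q: "\<And>s s'. 0 < mpow M n s s'" using erg by (auto simp: ergodic_def)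
  have "y s = (\<Sum>u\<in>UNIV. y u * mpow M n u s)" by (rule lfix_pow[OF lf])
  also have "\<dots> \<ge> y s0 * mpow M n s0 s"
    by (rule member_le_sum) (auto intro!: mult_nonneg_nonneg nn mpow_nonneg st)
  finally show ?thesis using Q[of s0 s] ex nn[of s0]
    by (smt (verit) mult_pos_pos)
qed

lemma harm_const:
  assumes st: "stoch M" and erg: "ergodic M" and h: "\<And>s. V s = (\<Sum>t\<in>UNIV. M s t * V t)"
  shows "V s = V t"
proof -
  obtain n where Q: "\<And>s s'. 0 < mpow M n s s'" using erg by (auto simp: ergodic_def)
  define m where "m = Max (range V)"
  have "m \<in> range V" unfolding m_def by (rule Max_in) auto
  then obtain s0 where s0: "V s0 = m" by auto
  have le: "V u \<le> m" for u unfolding m_def by simp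
  have e1: "V s0 = (\<Sum>u\<in>UNIV. mpow M n s0 u * V u)" by (rule harm_pow[OF h])
  have e2: "(\<Sum>u\<in>UNIV. mpow M n s0 u * (m - V u)) = (\<Sum>u\<in>UNIV. mpow M n s0 u) * m - (\<Sum>u\<in>UNIV. mpow M n s0 u * V u)"
    by (simp add: right_diff_distrib sum_subtractf sum_distrib_right)
  have "(\<Sum>u\<in>UNIV. mpow M n s0 u * (m - V u)) = 0"
    using e1 e2 s0 mpow_rowsum[OF st, of n s0] by simp
  moreover have "\<forall>u\<in>UNIV. 0 \<le> mpow M n s0 u * (m - V u)"
    using le mpow_nonneg[OF st] by auto
  ultimately have z: "\<forall>u\<in>UNIV. mpow M n s0 u * (m - V u) = 0"
    by (simp add: sum_nonneg_eq_0_iff)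
  have "V u = m" for u
  proof -
    have "mpow M n s0 u * (m - V u) = 0" using z by simp
    then show ?thesis using Q[of s0 u] by simp
  qed
  then show ?thesis by simp
qed

lemma abs_lfix:
  assumes st: "stoch M" and lf: "lfix M x"
  shows "lfix M (\<lambda>s. \<bar>x s\<bar>)"
proof -
  have le: "\<bar>x s'\<bar> \<le> (\<Sum>s\<in>UNIV. \<bar>x s\<bar> * M s s')" for s'
  proof -
    have "\<bar>x s'\<bar> = \<bar>\<Sum>s\<in>UNIV. x s * M s s'\<bar>" using lf by (metis lfix_def)
    also have "\<dots> \<le> (\<Sum>s\<in>UNIV. \<bar>x s * M s s'\<bar>)" by (rule sum_abs)
    also have "\<dots> = (\<Sum>s\<in>UNIV. \<bar>x s\<bar> * M s s')" using st by (simp add: abs_mult stoch_def)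
    finally show ?thesis .
  qed
  have eqs: "(\<Sum>s'\<in>UNIV. \<Sum>s\<in>UNIV. \<bar>x s\<bar> * M s s') = (\<Sum>s'\<in>UNIV. \<bar>x s'\<bar>)"
    using st by (simp add: sum_swap_col stoch_def)
  show ?thesis unfolding lfix_def
  proof (rule ccontr)
    assume "\<not> (\<forall>s'. \<bar>x s'\<bar> = (\<Sum>s\<in>UNIV. \<bar>x s\<bar> * M s s'))"
    then obtain s' where "\<bar>x s'\<bar> < (\<Sum>s\<in>UNIV. \<bar>x s\<bar> * M s s')" using le by (meson order_le_less)
    then have "(\<Sum>s'\<in>UNIV. \<bar>x s'\<bar>) < (\<Sum>s'\<in>UNIV. \<Sum>s\<in>UNIV. \<bar>x s\<bar> * M s s')"
      using le by (intro sum_strict_mono_ex1) auto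
    then show False using eqs by simp
  qed
qed

lemma lfix_eq: "lfix M x \<Longrightarrow> (\<Sum>s\<in>UNIV. x s * M s s') = x s'"
  by (metis lfix_def)

lemma lfixI: "(\<And>s'. (\<Sum>s\<in>UNIV. x s * M s s') = x s') \<Longrightarrow> lfix M x"
  by (metis lfix_def)

lemma stat_lfix: "is_stationary M p \<Longrightarrow> lfix M p"
  by (metis lfix_def is_stationary_def)

lemma stat_sum: "is_stationary M p \<Longrightarrow> (\<Sum>s\<in>UNIV. p s) = 1"
  by (metis is_stationary_def)

lemma stat_nonneg: "is_stationary M p \<Longrightarrow> 0 \<le> p s"
  by (metis is_stationary_def)

lemma stat_unique:
  assumes st: "stoch M" and erg: "ergodic M" and p: "is_stationary M \<pi>" and q: "is_stationary M \<sigma>"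
  shows "\<pi> = \<sigma>"
proof -
  define x where "x s = \<pi> s - \<sigma> s" for s
  have lx: "lfix M x"
  proof (rule lfixI)
    fix s'
    show "(\<Sum>s\<in>UNIV. x s * M s s') = x s'"
      unfolding x_def using lfix_eq[OF stat_lfix[OF p]] lfix_eq[OF stat_lfix[OF q]]
      by (simp add: left_diff_distrib sum_subtractf)
  qed
  have sx: "(\<Sum>s\<in>UNIV. x s) = 0" using stat_sum[OF p] stat_sum[OF q] by (simp add: x_def sum_subtractf)
  define y where "y s = (\<bar>x s\<bar> + x s) / 2" for s
  have la: "lfix M (\<lambda>s. \<bar>x s\<bar>)" by (rule abs_lfix[OF st lx])
  have ly: "lfix M y"
  proof (rule lfixI)
    fix s'
    have "(\<Sum>s\<in>UNIV. y s * M s s') = (\<Sum>s\<in>UNIV. (\<bar>x s\<bar> * M s s' + x s * M s s') / 2)"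
      by (rule sum.cong) (auto simp: y_def field_simps)
    also have "\<dots> = ((\<Sum>s\<in>UNIV. \<bar>x s\<bar> * M s s') + (\<Sum>s\<in>UNIV. x s * M s s')) / 2"
      by (simp add: sum_divide_distrib[symmetric] sum.distrib)
    also have "\<dots> = y s'" using lfix_eq[OF la] lfix_eq[OF lx] by (simp add: y_def)
    finally show "(\<Sum>s\<in>UNIV. y s * M s s') = y s'" .
  qed
  have yn: "0 \<le> y s" for s by (simp add: y_def)
  show ?thesis
  proof (cases "\<exists>s0. y s0 \<noteq> 0")
    case True
    then obtain s0 where "y s0 \<noteq> 0" by blast
    then have "0 < y s" for s by (rule lfix_nonneg_pos[OF st erg ly yn])
    then have "0 < x s" for s using \<open>\<And>s. 0 < y s\<close>[of s] unfolding y_def by (cases "x s \<le> 0") auto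
    then have "0 < (\<Sum>s\<in>UNIV. x s)" by (simp add: sum_pos)
    then show ?thesis using sx by simp
  next
    case False
    have "x s \<le> 0" for s
    proof -
      have "y s = 0" using False by blast
      then show ?thesis unfolding y_def by (cases "x s \<le> 0") auto
    qed
    have "(\<Sum>s\<in>UNIV. - x s) = 0" using sx by (simp add: sum_negf)
    moreover have "\<forall>s\<in>UNIV. 0 \<le> - x s" using \<open>\<And>s. x s \<le> 0\<close> by simp
    ultimately have "\<forall>s\<in>UNIV. - x s = 0" by (simp add: sum_nonneg_eq_0_iff)
    then have "\<forall>s\<in>UNIV. x s = 0" by simp
    then show ?thesis by (auto simp: x_def)
  qed
qed

lemma stat_exists:
  assumes st: "stoch M" and erg: "ergodic M"
  shows "\<exists>\<pi>. is_stationary M \<pi>"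
proof -
  have pw: "(\<Sum>t\<in>UNIV. ((if s = t then 1 else 0) - M t s) * x t) = x s - (\<Sum>t\<in>UNIV. M t s * x t)" for s x
    by (simp add: left_diff_distrib sum_subtractf delta_l)
  have "\<exists>x. (\<forall>s. (\<Sum>t\<in>UNIV. ((if s = t then 1 else 0) - M t s) * x t) = 0) \<and> \<not> (\<forall>s. x s = 0)"
  proof (rule ccontr)
    assume "\<not> ?thesis"
    then have "\<exists>x. \<forall>s. (\<Sum>t\<in>UNIV. ((if s = t then 1 else 0) - M t s) * x t) = 1"
      by (intro lin_surj) blast
    then obtain x where x: "\<And>s. (\<Sum>t\<in>UNIV. ((if s = t then 1 else 0) - M t s) * x t) = 1" by blast
    have sw: "(\<Sum>s\<in>UNIV. \<Sum>t\<in>UNIV. M t s * x t) = (\<Sum>t\<in>UNIV. x t)"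
    proof -
      have "(\<Sum>s\<in>UNIV. \<Sum>t\<in>UNIV. M t s * x t) = (\<Sum>t\<in>UNIV. \<Sum>s\<in>UNIV. M t s * x t)" by (rule sum.swap)
      also have "\<dots> = (\<Sum>t\<in>UNIV. (\<Sum>s\<in>UNIV. M t s) * x t)" by (simp add: sum_distrib_right)
      finally show ?thesis using st by (simp add: stoch_def)
    qed
    have "(\<Sum>s\<in>UNIV. (\<Sum>t\<in>UNIV. ((if s = t then 1 else 0) - M t s) * x t)) = 0"
      by (simp add: pw sum_subtractf sw)
    then show False using x by simp
  qed
  then obtain x where x0: "\<And>s. (\<Sum>t\<in>UNIV. ((if s = t then 1 else 0) - M t s) * x t) = 0"
    and nz: "\<not> (\<forall>s. x s = 0)" by blast
  have lx: "lfix M x"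
  proof (rule lfixI)
    fix s
    show "(\<Sum>t\<in>UNIV. x t * M t s) = x s" using x0[of s] pw[of s x] by (simp add: mult.commute)
  qed
  define y where "y s = \<bar>x s\<bar>" for s
  have ly: "lfix M y" using abs_lfix[OF st lx] by (simp add: y_def[abs_def])
  obtain s0 where "x s0 \<noteq> 0" using nz by blast
  then have yp: "0 < y s" for s by (intro lfix_nonneg_pos[OF st erg ly, of s0]) (auto simp: y_def)
  define Z where "Z = (\<Sum>s\<in>UNIV. y s)"
  have Zp: "0 < Z" unfolding Z_def using yp by (simp add: sum_pos)
  have "is_stationary M (\<lambda>s. y s / Z)"
    unfolding is_stationary_def
  proof (intro conjI allI)
    fix s show "0 \<le> y s / Z" using yp[of s] Zp by simp
  next
    show "(\<Sum>s\<in>UNIV. y s / Z) = 1" using Zp by (simp add: Z_def[symmetric] sum_divide_distrib[symmetric])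
  next
    fix s'
    have "(\<Sum>s\<in>UNIV. y s / Z * M s s') = (\<Sum>s\<in>UNIV. y s * M s s') / Z"
      by (simp add: sum_divide_distrib)
    then show "y s' / Z = (\<Sum>s\<in>UNIV. y s / Z * M s s')" using lfix_eq[OF ly, of s'] by simp
  qed
  then show ?thesis by blast
qed

lemma stat_the:
  assumes st: "stoch M" and erg: "ergodic M"
  shows "is_stationary M (THE \<pi>. is_stationary M \<pi>)"
  using stat_exists[OF st erg] stat_unique[OF st erg] by (metis theI)

lemma stat_pos:
  assumes st: "stoch M" and erg: "ergodic M" and p: "is_stationary M \<pi>"
  shows "0 < \<pi> s"
proof -
  have "\<exists>s0. \<pi> s0 \<noteq> 0"
  proof (rule ccontr)
    assume "\<not> ?thesis" then show False using stat_sum[OF p] by simp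
  qed
  then obtain s0 where "\<pi> s0 \<noteq> 0" by blast
  then show ?thesis
    by (intro lfix_nonneg_pos[OF st erg stat_lfix[OF p] stat_nonneg[OF p], of s0])
qed

lemma poisson_exists:
  fixes M :: "'s::finite \<Rightarrow> 's \<Rightarrow> real"
  assumes st: "stoch M" and erg: "ergodic M" and p: "is_stationary M \<pi>"
    and c0: "(\<Sum>s\<in>UNIV. \<pi> s * c s) = 0"
  shows "\<exists>V. \<forall>s. V s = c s + (\<Sum>t\<in>UNIV. M s t * V t)"
proof -
  define T where "T s t = (if s = t then 1 else 0) - M s t + \<pi> t" for s t
  have Tx: "(\<Sum>t\<in>UNIV. T s t * x t) = x s - (\<Sum>t\<in>UNIV. M s t * x t) + (\<Sum>t\<in>UNIV. \<pi> t * x t)" for s and x :: "'s \<Rightarrow> real"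
    by (simp add: T_def distrib_right left_diff_distrib sum.distrib sum_subtractf delta_l)
  have piM: "(\<Sum>s\<in>UNIV. \<pi> s * (\<Sum>t\<in>UNIV. M s t * x t)) = (\<Sum>t\<in>UNIV. \<pi> t * x t)" for x :: "'s \<Rightarrow> real"
  proof -
    have "(\<Sum>s\<in>UNIV. \<pi> s * (\<Sum>t\<in>UNIV. M s t * x t)) = (\<Sum>t\<in>UNIV. (\<Sum>s\<in>UNIV. \<pi> s * M s t) * x t)"
      by (rule swap_lr)
    also have "\<dots> = (\<Sum>t\<in>UNIV. \<pi> t * x t)" using lfix_eq[OF stat_lfix[OF p]] by simp
    finally show ?thesis .
  qed
  have key: "(\<Sum>s\<in>UNIV. \<pi> s * (\<Sum>t\<in>UNIV. T s t * x t)) = (\<Sum>t\<in>UNIV. \<pi> t * x t)" for x :: "'s \<Rightarrow> real"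
  proof -
    have "(\<Sum>s\<in>UNIV. \<pi> s * (\<Sum>t\<in>UNIV. T s t * x t)) =
      (\<Sum>s\<in>UNIV. \<pi> s * x s - \<pi> s * (\<Sum>t\<in>UNIV. M s t * x t) + \<pi> s * (\<Sum>t\<in>UNIV. \<pi> t * x t))"
      by (rule sum.cong) (simp_all add: Tx right_diff_distrib distrib_left)
    also have "\<dots> = (\<Sum>s\<in>UNIV. \<pi> s * x s) - (\<Sum>s\<in>UNIV. \<pi> s * (\<Sum>t\<in>UNIV. M s t * x t))
        + (\<Sum>s\<in>UNIV. \<pi> s) * (\<Sum>t\<in>UNIV. \<pi> t * x t)"
      by (simp only: sum.distrib sum_subtractf sum_distrib_right)
    finally show ?thesis using piM[of x] stat_sum[OF p] by simp
  qed
  have "\<exists>V. \<forall>s. (\<Sum>t\<in>UNIV. T s t * V t) = c s"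
  proof (rule lin_surj)
    fix x assume x0: "\<forall>s. (\<Sum>t\<in>UNIV. T s t * x t) = 0"
    have px: "(\<Sum>t\<in>UNIV. \<pi> t * x t) = 0" using key[of x] x0 by simp
    have h: "x s = (\<Sum>t\<in>UNIV. M s t * x t)" for s using x0 Tx[of s x] px by simp
    obtain s0 :: 's where True by blast
    have xc: "x s = x s0" for s by (rule harm_const[OF st erg h])
    have "(\<Sum>t\<in>UNIV. \<pi> t * x t) = (\<Sum>t\<in>UNIV. \<pi> t * x s0)" by (rule sum.cong) (auto intro: xc)
    then have "(\<Sum>t\<in>UNIV. \<pi> t * x t) = (\<Sum>t\<in>UNIV. \<pi> t) * x s0" by (simp add: sum_distrib_right)
    then have "x s0 = 0" using px stat_sum[OF p] by simp
    then show "\<forall>s. x s = 0" using xc by metis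
  qed
  then obtain V where V: "\<And>s. (\<Sum>t\<in>UNIV. T s t * V t) = c s" by blast
  have "(\<Sum>t\<in>UNIV. \<pi> t * V t) = 0" using key[of V] V c0 by simp
  then have "V s = c s + (\<Sum>t\<in>UNIV. M s t * V t)" for s using V[of s] Tx[of s V] by simp
  then show ?thesis by blast
qed

locale game =
  fixes A :: "'i::finite \<Rightarrow> 'a set"
    and P :: "'s::finite \<Rightarrow> ('i \<Rightarrow> 'a) \<Rightarrow> 's \<Rightarrow> real"
    and r :: "'s \<Rightarrow> ('i \<Rightarrow> 'a) \<Rightarrow> real"
    and \<beta> :: real
  assumes A_fin: "\<And>i. finite (A i)"
    and P_nonneg: "\<And>s a s'. a \<in> joint_actions A \<Longrightarrow> 0 \<le> P s a s'"
    and P_sum: "\<And>s a. a \<in> joint_actions A \<Longrightarrow> (\<Sum>s'\<in>UNIV. P s a s') = 1"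
    and erg: "\<And>mu. mu \<in> joint_policies A \<Longrightarrow> ergodic (Pmu A P mu)"
    and eta_const: "\<And>mu mu'. mu \<in> joint_policies A \<Longrightarrow> mu' \<in> joint_policies A \<Longrightarrow>
                      eta A P r mu = eta A P r mu'"
begin

lemma JA_eq: "joint_actions A = PiE UNIV A"
  by (auto simp: joint_actions_def PiE_def Pi_def extensional_def)

lemma JA_fin: "finite (joint_actions A)"
  unfolding JA_eq by (rule finite_PiE) (auto simp: A_fin)

lemma pol_nonneg: "mu \<in> joint_policies A \<Longrightarrow> 0 \<le> mu i s b"
  by (auto simp: joint_policies_def policy_set_def)

lemma pol_sum: "mu \<in> joint_policies A \<Longrightarrow> (\<Sum>b\<in>A i. mu i s b) = 1"
  by (auto simp: joint_policies_def policy_set_def)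

lemma jprob_nonneg: "mu \<in> joint_policies A \<Longrightarrow> 0 \<le> jprob mu s a"
  unfolding jprob_def by (intro prod_nonneg) (auto intro: pol_nonneg)

lemma jprob_sum: "mu \<in> joint_policies A \<Longrightarrow> (\<Sum>a\<in>joint_actions A. jprob mu s a) = 1"
proof -
  assume mu: "mu \<in> joint_policies A"
  have "(\<Sum>a\<in>joint_actions A. jprob mu s a) = (\<Sum>a\<in>PiE UNIV A. \<Prod>i\<in>UNIV. mu i s (a i))"
    by (simp add: JA_eq jprob_def)
  also have "\<dots> = (\<Prod>i\<in>UNIV. \<Sum>b\<in>A i. mu i s b)"
    by (rule prod_sum_PiE[symmetric]) (auto simp: A_fin)
  also have "\<dots> = 1" using pol_sum[OF mu] by simp
  finally show ?thesis .
qed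

lemma Pmu_stoch: "mu \<in> joint_policies A \<Longrightarrow> stoch (Pmu A P mu)"
proof -
  assume mu: "mu \<in> joint_policies A"
  have "0 \<le> Pmu A P mu s t" for s t
    unfolding Pmu_def by (intro sum_nonneg mult_nonneg_nonneg jprob_nonneg[OF mu] P_nonneg)
  moreover have "(\<Sum>t\<in>UNIV. Pmu A P mu s t) = 1" for s
  proof -
    have "(\<Sum>t\<in>UNIV. Pmu A P mu s t) = (\<Sum>a\<in>joint_actions A. \<Sum>t\<in>UNIV. jprob mu s a * P s a t)"
      unfolding Pmu_def by (rule sum.swap)
    also have "\<dots> = (\<Sum>a\<in>joint_actions A. jprob mu s a)"
      by (rule sum.cong) (auto simp: sum_distrib_left[symmetric] P_sum)
    finally show ?thesis using jprob_sum[OF mu] by simp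
  qed
  ultimately show ?thesis by (simp add: stoch_def)
qed

lemma stat: "mu \<in> joint_policies A \<Longrightarrow> is_stationary (Pmu A P mu) (stat_dist A P mu)"
  unfolding stat_dist_def by (rule stat_the[OF Pmu_stoch erg])

lemma stat_pos': "mu \<in> joint_policies A \<Longrightarrow> 0 < stat_dist A P mu s"
  by (rule stat_pos[OF Pmu_stoch erg stat])

lemma J_eq: "mu \<in> joint_policies A \<Longrightarrow>
   Jmv A P r \<beta> mu = (\<Sum>s\<in>UNIV. stat_dist A P mu s * f_s A P r \<beta> mu s)"
proof -
  define E where "E = eta A P r mu"
  have E: "E = (\<Sum>s\<in>UNIV. stat_dist A P mu s * (\<Sum>a\<in>joint_actions A. jprob mu s a * r s a))"
    unfolding E_def eta_def ..
  have "(\<Sum>s\<in>UNIV. stat_dist A P mu s * f_s A P r \<beta> mu s) =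
     (\<Sum>s\<in>UNIV. stat_dist A P mu s * (\<Sum>a\<in>joint_actions A. jprob mu s a * r s a)
       - \<beta> * (stat_dist A P mu s * (\<Sum>a\<in>joint_actions A. jprob mu s a * (r s a - E)\<^sup>2)))"
    unfolding f_s_def f_sa_def E_def[symmetric]
    by (rule sum.cong) (simp_all add: right_diff_distrib sum_subtractf sum_distrib_left mult.left_commute)
  also have "\<dots> = E - \<beta> * zeta A P r mu"
    unfolding E zeta_def E_def[symmetric] by (simp add: sum_subtractf sum_distrib_left)
  finally show ?thesis by (simp add: Jmv_def E_def)
qed

lemma Vf_ok: "mu \<in> joint_policies A \<Longrightarrow> is_Vf A P r \<beta> mu (Vf A P r \<beta> mu)"
proof -
  assume mu: "mu \<in> joint_policies A"
  define c where "c s = f_s A P r \<beta> mu s - Jmv A P r \<beta> mu" for s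
  have "(\<Sum>s\<in>UNIV. stat_dist A P mu s * c s) =
      (\<Sum>s\<in>UNIV. stat_dist A P mu s * f_s A P r \<beta> mu s) - (\<Sum>s\<in>UNIV. stat_dist A P mu s) * Jmv A P r \<beta> mu"
    by (simp add: c_def right_diff_distrib sum_subtractf sum_distrib_right)
  also have "\<dots> = 0" using J_eq[OF mu] stat_sum[OF stat[OF mu]] by simp
  finally obtain V where eq: "\<forall>s. V s = c s + (\<Sum>t\<in>UNIV. Pmu A P mu s t * V t)"
    using poisson_exists[OF Pmu_stoch[OF mu] erg[OF mu] stat[OF mu]] by blast
  have "is_Vf A P r \<beta> mu V" unfolding is_Vf_def
  proof
    fix s show "V s = f_s A P r \<beta> mu s - Jmv A P r \<beta> mu + (\<Sum>s'\<in>UNIV. Pmu A P mu s s' * V s')"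
      using eq[rule_format, of s] unfolding c_def by linarith
  qed
  then show ?thesis unfolding Vf_def by (rule someI[where P="is_Vf A P r \<beta> mu"])
qed

lemma f_sa_eq: "mu \<in> joint_policies A \<Longrightarrow> mu' \<in> joint_policies A \<Longrightarrow> f_sa A P r \<beta> mu = f_sa A P r \<beta> mu'"
proof -
  assume a: "mu \<in> joint_policies A" "mu' \<in> joint_policies A"
  have "eta A P r mu = eta A P r mu'" by (rule eta_const[OF a])
  then show ?thesis by (simp add: f_sa_def[abs_def])
qed

lemma adv_avg:
  assumes mu: "mu \<in> joint_policies A" and mu': "mu' \<in> joint_policies A"
  shows "(\<Sum>a\<in>joint_actions A. jprob mu' s a * Af A P r \<beta> mu s a) =
    f_s A P r \<beta> mu' s - Jmv A P r \<beta> mu + (\<Sum>t\<in>UNIV. Pmu A P mu' s t * Vf A P r \<beta> mu t) - Vf A P r \<beta> mu s"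
proof -
  let ?V = "Vf A P r \<beta> mu" and ?J = "Jmv A P r \<beta> mu"
  have sw: "(\<Sum>a\<in>joint_actions A. jprob mu' s a * (\<Sum>t\<in>UNIV. P s a t * ?V t)) =
      (\<Sum>t\<in>UNIV. Pmu A P mu' s t * ?V t)"
  proof -
    have "(\<Sum>a\<in>joint_actions A. jprob mu' s a * (\<Sum>t\<in>UNIV. P s a t * ?V t)) =
        (\<Sum>a\<in>joint_actions A. \<Sum>t\<in>UNIV. jprob mu' s a * P s a t * ?V t)"
      by (simp add: sum_distrib_left mult.assoc)
    also have "\<dots> = (\<Sum>t\<in>UNIV. \<Sum>a\<in>joint_actions A. jprob mu' s a * P s a t * ?V t)" by (rule sum.swap)
    also have "\<dots> = (\<Sum>t\<in>UNIV. Pmu A P mu' s t * ?V t)" by (simp add: Pmu_def sum_distrib_right)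
    finally show ?thesis .
  qed
  have "(\<Sum>a\<in>joint_actions A. jprob mu' s a * Af A P r \<beta> mu s a) =
     (\<Sum>a\<in>joint_actions A. jprob mu' s a * f_sa A P r \<beta> mu' s a
        + jprob mu' s a * (\<Sum>t\<in>UNIV. P s a t * ?V t) - jprob mu' s a * (?J + ?V s))"
    unfolding Af_def Qf_def f_sa_eq[OF mu mu']
    by (rule sum.cong) (simp_all add: algebra_simps)
  also have "\<dots> = f_s A P r \<beta> mu' s + (\<Sum>t\<in>UNIV. Pmu A P mu' s t * ?V t)
      - (\<Sum>a\<in>joint_actions A. jprob mu' s a) * (?J + ?V s)"
    by (simp add: sum.distrib sum_subtractf sum_distrib_right f_s_def sw)
  finally show ?thesis using jprob_sum[OF mu'] by simp
qed

lemma PD: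
  assumes mu: "mu \<in> joint_policies A" and mu': "mu' \<in> joint_policies A"
  shows "Jmv A P r \<beta> mu' - Jmv A P r \<beta> mu =
    (\<Sum>s\<in>UNIV. stat_dist A P mu' s * (\<Sum>a\<in>joint_actions A. jprob mu' s a * Af A P r \<beta> mu s a))"
proof -
  let ?V = "Vf A P r \<beta> mu" and ?J = "Jmv A P r \<beta> mu" and ?p = "stat_dist A P mu'"
  have st: "(\<Sum>s\<in>UNIV. ?p s * (\<Sum>t\<in>UNIV. Pmu A P mu' s t * ?V t)) = (\<Sum>t\<in>UNIV. ?p t * ?V t)"
    using swap_lr[of ?p "Pmu A P mu'" ?V] lfix_eq[OF stat_lfix[OF stat[OF mu']]] by simp
  have "(\<Sum>s\<in>UNIV. ?p s * (\<Sum>a\<in>joint_actions A. jprob mu' s a * Af A P r \<beta> mu s a)) =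
     (\<Sum>s\<in>UNIV. ?p s * f_s A P r \<beta> mu' s - ?p s * ?J + ?p s * (\<Sum>t\<in>UNIV. Pmu A P mu' s t * ?V t) - ?p s * ?V s)"
    by (rule sum.cong) (simp_all add: adv_avg[OF mu mu'] algebra_simps)
  also have "\<dots> = Jmv A P r \<beta> mu' - (\<Sum>s\<in>UNIV. ?p s) * ?J"
    by (simp add: sum.distrib sum_subtractf sum_distrib_right st J_eq[OF mu'])
  finally show ?thesis using stat_sum[OF stat[OF mu']] by simp
qed

lemma adv_zero:
  assumes mu: "mu \<in> joint_policies A"
  shows "(\<Sum>a\<in>joint_actions A. jprob mu s a * Af A P r \<beta> mu s a) = 0"
  using adv_avg[OF mu mu, of s] Vf_ok[OF mu, unfolded is_Vf_def, rule_format, of s] by linarith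

end

lemma chain_le:
  fixes f :: "nat \<Rightarrow> real"
  assumes "\<And>h. h < N \<Longrightarrow> f h \<le> f (Suc h)"
  shows "j \<le> k \<Longrightarrow> k \<le> N \<Longrightarrow> f j \<le> f k"
proof (induction k)
  case 0 then show ?case by simp
next
  case (Suc k)
  show ?case
  proof (cases "j = Suc k")
    case True then show ?thesis by simp
  next
    case False
    then have "f j \<le> f k" using Suc by simp
    also have "f k \<le> f (Suc k)" using assms Suc.prems by simp
    finally show ?thesis .
  qed
qed

lemma distinct_nth_notin_take:
  assumes "distinct xs" "h < length xs"
  shows "xs ! h \<notin> set (take h xs)"
proof
  assume "xs ! h \<in> set (take h xs)"
  then obtain k where k: "k < length (take h xs)" "take h xs ! k = xs ! h" by (auto simp: in_set_conv_nth)
  then have "k < h" "xs ! k = xs ! h" by auto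
  with assms show False by (simp add: nth_eq_iff_index_eq)
qed

context game begin

lemma decomp:
  "(\<Sum>a\<in>joint_actions A. jprob (mu(i:=p)) s a * X a) =
   (\<Sum>b\<in>A i. p s b * (\<Sum>a\<in>{a\<in>joint_actions A. a i = b}. (\<Prod>j\<in>UNIV-{i}. mu j s (a j)) * X a))"
proof -
  have jp: "jprob (mu(i:=p)) s a = p s (a i) * (\<Prod>j\<in>UNIV-{i}. mu j s (a j))" for a
  proof -
    have "jprob (mu(i:=p)) s a = (mu(i:=p)) i s (a i) * (\<Prod>j\<in>UNIV-{i}. (mu(i:=p)) j s (a j))"
      unfolding jprob_def by (rule prod.remove) auto
    also have "(\<Prod>j\<in>UNIV-{i}. (mu(i:=p)) j s (a j)) = (\<Prod>j\<in>UNIV-{i}. mu j s (a j))"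
      by (rule prod.cong) auto
    finally show ?thesis by (simp only: fun_upd_same)
  qed
  have "(\<Sum>a\<in>joint_actions A. jprob (mu(i:=p)) s a * X a) =
     (\<Sum>b\<in>A i. \<Sum>a\<in>{a\<in>joint_actions A. a i = b}. jprob (mu(i:=p)) s a * X a)"
    by (rule sum.group[symmetric]) (auto simp: JA_fin A_fin, auto simp: joint_actions_def)
  also have "\<dots> = (\<Sum>b\<in>A i. p s b * (\<Sum>a\<in>{a\<in>joint_actions A. a i = b}. (\<Prod>j\<in>UNIV-{i}. mu j s (a j)) * X a))"
  proof (rule sum.cong[OF refl])
    fix b assume "b \<in> A i"
    have "(\<Sum>a\<in>{a\<in>joint_actions A. a i = b}. jprob (mu(i:=p)) s a * X a) =
        (\<Sum>a\<in>{a\<in>joint_actions A. a i = b}. p s b * ((\<Prod>j\<in>UNIV-{i}. mu j s (a j)) * X a))"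
      by (rule sum.cong[OF refl]) (auto simp: jp)
    then show "(\<Sum>a\<in>{a\<in>joint_actions A. a i = b}. jprob (mu(i:=p)) s a * X a) =
        p s b * (\<Sum>a\<in>{a\<in>joint_actions A. a i = b}. (\<Prod>j\<in>UNIV-{i}. mu j s (a j)) * X a)"
      by (simp add: sum_distrib_left)
  qed
  finally show ?thesis .
qed

lemma upd_in: "mu \<in> joint_policies A \<Longrightarrow> p \<in> policy_set A i \<Longrightarrow> mu(i:=p) \<in> joint_policies A"
  by (auto simp: joint_policies_def)

lemma PD_i:
  assumes mu: "mu \<in> joint_policies A" and p: "p \<in> policy_set A i"
  shows "Jmv A P r \<beta> (mu(i:=p)) - Jmv A P r \<beta> mu =
    (\<Sum>s\<in>UNIV. stat_dist A P (mu(i:=p)) s * (\<Sum>b\<in>A i. p s b * exp_adv A P r \<beta> mu i s b))"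
  unfolding PD[OF mu upd_in[OF mu p]] decomp exp_adv_def ..

lemma zero_i:
  assumes mu: "mu \<in> joint_policies A"
  shows "(\<Sum>b\<in>A i. mu i s b * exp_adv A P r \<beta> mu i s b) = 0"
  using adv_zero[OF mu, of s] decomp[of "mu" i "mu i" s "Af A P r \<beta> mu s"]
  by (simp add: exp_adv_def)

lemma det_in: "(\<And>i s. dd i s \<in> A i) \<Longrightarrow> det_pol dd \<in> joint_policies A"
  unfolding joint_policies_def policy_set_def det_pol_def using A_fin
  by auto

lemma det_sum:
  assumes "dd i s \<in> A i"
  shows "(\<Sum>b\<in>A i. det_pol dd i s b * g b) = g (dd i s)"
proof -
  have "(\<Sum>b\<in>A i. det_pol dd i s b * g b) = (\<Sum>b\<in>A i. if dd i s = b then g b else 0)"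
    by (rule sum.cong) (auto simp: det_pol_def)
  then show ?thesis using assms A_fin by simp
qed

lemma zero_det:
  assumes "\<And>i s. dd i s \<in> A i"
  shows "exp_adv A P r \<beta> (det_pol dd) i s (dd i s) = 0"
proof -
  have a: "dd i s \<in> A i" by (rule assms)
  show ?thesis
    using zero_i[OF det_in[OF assms], where i=i and s=s] det_sum[where dd=dd and i=i and s=s and g="exp_adv A P r \<beta> (det_pol dd) i s", OF a]
    by simp
qed

end

context game begin

lemma step:
  assumes dd: "\<And>i s. dd i s \<in> A i" and perm: "is_perm perm"
    and ms: "mapi_step A P r \<beta> perm dd dd'"
  shows "(\<forall>i s. dd' i s \<in> A i) \<and> Jmv A P r \<beta> (det_pol dd) \<le> Jmv A P r \<beta> (det_pol dd')
     \<and> (dd' \<noteq> dd \<longrightarrow> Jmv A P r \<beta> (det_pol dd) < Jmv A P r \<beta> (det_pol dd'))"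
proof -
  define N where "N = length perm"
  have dist: "distinct perm" and setp: "set perm = UNIV" using perm by (auto simp: is_perm_def)
  have ex: "\<exists>h<N. perm ! h = i" for i
    using setp by (metis N_def UNIV_I in_set_conv_nth)
  define mix where "mix h = (\<lambda>j. if j \<in> set (take h perm) then dd' j else dd j)" for h
  define g where "g h s = exp_adv A P r \<beta> (det_pol (mix h)) (perm ! h) s" for h s
  have msh: "dd' (perm ! h) s \<in> A (perm ! h) \<and> (\<forall>b\<in>A (perm ! h). g h s b \<le> g h s (dd' (perm ! h) s))
     \<and> ((\<forall>b\<in>A (perm ! h). g h s b \<le> g h s (dd (perm ! h) s)) \<longrightarrow> dd' (perm ! h) s = dd (perm ! h) s)"
    if "h < N" for h s
    using ms that unfolding mapi_step_def Let_def g_def mix_def N_def by blast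
  have dd': "dd' i s \<in> A i" for i s
    using ex[of i] msh by blast
  have mixA: "mix h i s \<in> A i" for h i s using dd dd' by (simp add: mix_def)
  have mix0: "mix 0 = dd" by (simp add: mix_def)
  have mixN: "mix N = dd'" by (simp add: mix_def N_def setp)
  have notin: "perm ! h \<notin> set (take h perm)" if "h < N" for h
    using distinct_nth_notin_take[OF dist] that by (simp add: N_def)
  have mixh: "mix h (perm ! h) = dd (perm ! h)" if "h < N" for h
    using notin[OF that] by (simp add: mix_def)
  have mixS: "det_pol (mix (Suc h)) = (det_pol (mix h))(perm ! h := det_pol dd' (perm ! h))" if "h < N" for h
  proof -
    have "set (take (Suc h) perm) = insert (perm ! h) (set (take h perm))"
      using that by (simp add: N_def take_Suc_conv_app_nth)
    then show ?thesis by (auto simp: mix_def det_pol_def fun_eq_iff)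
  qed
  define f where "f h = Jmv A P r \<beta> (det_pol (mix h))" for h
  have inJ: "det_pol (mix h) \<in> joint_policies A" for h by (rule det_in[where dd="mix h", OF mixA])
  have polI: "det_pol dd' i \<in> policy_set A i" for i
    using det_in[where dd=dd', OF dd'] by (simp add: joint_policies_def)
  have incr: "f (Suc h) - f h = (\<Sum>s\<in>UNIV. stat_dist A P (det_pol (mix (Suc h))) s * g h s (dd' (perm ! h) s))"
    if "h < N" for h
  proof -
    have "f (Suc h) - f h = (\<Sum>s\<in>UNIV. stat_dist A P (det_pol (mix (Suc h))) s *
         (\<Sum>b\<in>A (perm ! h). det_pol dd' (perm ! h) s b * exp_adv A P r \<beta> (det_pol (mix h)) (perm ! h) s b))"
      unfolding f_def mixS[OF that] by (rule PD_i[OF inJ polI])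
    also have "\<dots> = (\<Sum>s\<in>UNIV. stat_dist A P (det_pol (mix (Suc h))) s * g h s (dd' (perm ! h) s))"
      by (rule sum.cong[OF refl]) (simp add: det_sum[where dd=dd' and i="perm ! h", OF dd'] g_def)
    finally show ?thesis .
  qed
  have g0: "g h s (dd (perm ! h) s) = 0" if "h < N" for h s
    using zero_det[where dd="mix h" and i="perm ! h" and s=s, OF mixA] mixh[OF that] by (simp add: g_def)
  have gnn: "0 \<le> g h s (dd' (perm ! h) s)" if "h < N" for h s
    using msh[OF that, of s] dd[of "perm ! h" s] g0[OF that, of s] by fastforce
  have gpos: "0 < g h s (dd' (perm ! h) s)" if hN: "h < N" and ne: "dd' (perm ! h) s \<noteq> dd (perm ! h) s" for h s
  proof -
    obtain b where "b \<in> A (perm ! h)" "g h s b > g h s (dd (perm ! h) s)"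
      using msh[OF hN, of s] ne by (meson not_le)
    then show ?thesis using msh[OF hN, of s] g0[OF hN, of s] by fastforce
  qed
  have mono: "f h \<le> f (Suc h)" if "h < N" for h
  proof -
    have "0 \<le> (\<Sum>s\<in>UNIV. stat_dist A P (det_pol (mix (Suc h))) s * g h s (dd' (perm ! h) s))"
      using stat_pos'[OF inJ] gnn[OF that] by (intro sum_nonneg mult_nonneg_nonneg) (auto intro: less_imp_le)
    then show ?thesis using incr[OF that] by simp
  qed
  have strict: "f h < f (Suc h)" if "h < N" "dd' (perm ! h) s0 \<noteq> dd (perm ! h) s0" for h s0
  proof -
    have "0 < stat_dist A P (det_pol (mix (Suc h))) s0 * g h s0 (dd' (perm ! h) s0)"
      using stat_pos'[OF inJ] gpos[OF that] by simp
    also have "\<dots> \<le> (\<Sum>s\<in>UNIV. stat_dist A P (det_pol (mix (Suc h))) s * g h s (dd' (perm ! h) s))"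
      using stat_pos'[OF inJ, THEN less_imp_le] gnn[OF that(1)]
      by (intro member_le_sum) (auto intro!: mult_nonneg_nonneg)
    finally show ?thesis using incr[OF that(1)] by simp
  qed
  have le: "f 0 \<le> f N" by (rule chain_le[where f=f and N=N, OF mono]) auto
  have lt: "f 0 < f N" if ne: "dd' \<noteq> dd"
  proof -
    obtain i s0 where "dd' i s0 \<noteq> dd i s0" using ne by (meson ext)
    moreover obtain h where h: "h < N" "perm ! h = i" using ex by blast
    ultimately have "f h < f (Suc h)" using strict by blast
    moreover have "f 0 \<le> f h" by (rule chain_le[where f=f and N=N, OF mono]) (use h in auto)
    moreover have "f (Suc h) \<le> f N" by (rule chain_le[where f=f and N=N, OF mono]) (use h in auto)
    ultimately show ?thesis by linarith
  qed
  show ?thesis using dd' le lt by (simp add: f_def mix0 mixN)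
qed

lemma nash:
  assumes dd: "\<And>i s. dd i s \<in> A i" and perm: "is_perm perm"
    and ms: "mapi_step A P r \<beta> perm dd dd"
  shows "is_nash A P r \<beta> (det_pol dd)"
  unfolding is_nash_def
proof (intro allI ballI)
  fix i and p :: "'s \<Rightarrow> 'a \<Rightarrow> real" assume p: "p \<in> policy_set A i"
  have setp: "set perm = UNIV" using perm by (auto simp: is_perm_def)
  obtain h where h: "h < length perm" "perm ! h = i" using setp by (metis UNIV_I in_set_conv_nth)
  let ?mu = "det_pol dd"
  let ?g = "exp_adv A P r \<beta> ?mu i"
  have mu: "?mu \<in> joint_policies A" by (rule det_in[OF dd])
  have gle0: "\<forall>b\<in>A i. ?g s b \<le> ?g s (dd i s)" for s
  proof -
    have "let i = perm ! h;
            hat = det_pol (\<lambda>j. if j \<in> set (take h perm) then dd j else dd j);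
            g = exp_adv A P r \<beta> hat i s
        in dd i s \<in> A i
           \<and> (\<forall>b\<in>A i. g b \<le> g (dd i s))
           \<and> ((\<forall>b\<in>A i. g b \<le> g (dd i s)) \<longrightarrow> dd i s = dd i s)"
      using ms h(1) unfolding mapi_step_def by blast
    then show ?thesis unfolding Let_def h(2) by simp
  qed
  have gle: "\<forall>b\<in>A i. ?g s b \<le> 0" for s using gle0[of s] zero_det[where dd=dd and i=i and s=s, OF dd] by simp
  have pnn: "0 \<le> p s b" for s b using p by (simp add: policy_set_def)
  have "(\<Sum>s\<in>UNIV. stat_dist A P (?mu(i:=p)) s * (\<Sum>b\<in>A i. p s b * ?g s b)) \<le> 0"
  proof (rule sum_nonpos, rule mult_nonneg_nonpos)
    fix s show "0 \<le> stat_dist A P (?mu(i:=p)) s"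
      using stat_pos'[OF upd_in[OF mu p]] by (simp add: less_imp_le)
    show "(\<Sum>b\<in>A i. p s b * ?g s b) \<le> 0"
      using gle[of s] pnn by (intro sum_nonpos mult_nonneg_nonpos) auto
  qed
  then show "Jmv A P r \<beta> (?mu(i := p)) \<le> Jmv A P r \<beta> ?mu"
    using PD_i[OF mu p] by simp
qed

end

theorem corollary2:
  fixes A :: "'i::finite \<Rightarrow> 'a set"
    and P :: "'s::finite \<Rightarrow> ('i \<Rightarrow> 'a) \<Rightarrow> 's \<Rightarrow> real"
    and r :: "'s \<Rightarrow> ('i \<Rightarrow> 'a) \<Rightarrow> real"
    and \<beta> :: real
    and perms :: "nat \<Rightarrow> 'i list"
    and d :: "nat \<Rightarrow> 'i \<Rightarrow> 's \<Rightarrow> 'a"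
  assumes A_fin: "\<And>i. finite (A i)"
    and A_ne: "\<And>i. A i \<noteq> {}"
    and P_nonneg: "\<And>s a s'. a \<in> joint_actions A \<Longrightarrow> 0 \<le> P s a s'"
    and P_sum: "\<And>s a. a \<in> joint_actions A \<Longrightarrow> (\<Sum>s'\<in>UNIV. P s a s') = 1"
    and beta: "0 \<le> \<beta>"
    and erg: "\<And>mu. mu \<in> joint_policies A \<Longrightarrow> ergodic (Pmu A P mu)"
    and eta_const: "\<And>mu mu'. mu \<in> joint_policies A \<Longrightarrow> mu' \<in> joint_policies A \<Longrightarrow>
                      eta A P r mu = eta A P r mu'"
    and perms: "\<And>k. is_perm (perms k)"
    and init: "\<And>i s. d 0 i s \<in> A i"
    and run: "\<And>k. mapi_step A P r \<beta> (perms k) (d k) (d (Suc k))"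
  shows "(\<exists>k. d (Suc k) = d k) \<and>
         (\<forall>k. d (Suc k) = d k \<longrightarrow> is_nash A P r \<beta> (det_pol (d k)))"
proof -
  interpret game A P r \<beta>
    by unfold_locales (fact A_fin P_nonneg P_sum erg eta_const)+
  have inA: "\<forall>i s. d k i s \<in> A i" for k
  proof (induction k)
    case 0 then show ?case using init by blast
  next
    case (Suc k)
    have "\<And>i s. d k i s \<in> A i" using Suc by blast
    from step[OF this perms[of k] run[of k]] show ?case by blast
  qed
  define J where "J k = Jmv A P r \<beta> (det_pol (d k))" for k
  have ex: "\<exists>k. d (Suc k) = d k"
  proof (rule ccontr)
    assume "\<not> ?thesis"
    then have ne: "d (Suc k) \<noteq> d k" for k by blast
    have "J k < J (Suc k)" for k
    proof -
      have "\<And>i s. d k i s \<in> A i" using inA[of k] by blast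
      from step[OF this perms[of k] run[of k]] ne[of k] show ?thesis unfolding J_def by blast
    qed
    then have sm: "strict_mono J" by (rule strict_monoI_Suc)
    have injd: "inj d"
    proof (rule injI)
      fix x y assume "d x = d y"
      then have "J x = J y" by (simp add: J_def)
      then show "x = y" using sm by (simp add: strict_mono_eq)
    qed
    have rs: "range d \<subseteq> PiE UNIV (\<lambda>i. PiE (UNIV :: 's set) (\<lambda>s. A i))"
      using inA by (auto simp: PiE_def Pi_def extensional_def)
    moreover have "finite (PiE UNIV (\<lambda>i. PiE (UNIV :: 's set) (\<lambda>s. A i)))"
      by (intro finite_PiE) (auto simp: A_fin)
    ultimately have "finite (range d)" using rs by (metis finite_subset)
    then have "finite (UNIV :: nat set)" using injd by (rule finite_imageD)
    then show False by simp
  qed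
  moreover have "\<forall>k. d (Suc k) = d k \<longrightarrow> is_nash A P r \<beta> (det_pol (d k))"
  proof (intro allI impI)
    fix k assume "d (Suc k) = d k"
    then have "mapi_step A P r \<beta> (perms k) (d k) (d k)" using run[of k] by simp
    moreover have "\<And>i s. d k i s \<in> A i" using inA[of k] by blast
    ultimately show "is_nash A P r \<beta> (det_pol (d k))"
      using nash[OF _ perms[of k]] by blast
  qed
  ultimately show ?thesis by blast
qed

end
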